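(* Let $A$ be an $F_n$-good $n\times n$ matrix and suppose $A_{i,j}=1$. If $i'\in\{i-1,i+1\}$ with $1\leq i'\leq n$ and $A_{i',k}=1$ for some column $k$, then $k\in\{j-1,j+1\}$.
   Context: $F_n$ is the set of vectors $\vec{x}=(x_1,\ldots,x_n)\in\mathbb{Z}_2^n$ with no $i$ such that $x_i=x_{i+1}=1$. An $n\times n$ matrix $A$ over $\mathbb{Z}_2$ is $F_n$-good if it is invertible and $A\vec{x}\in F_n$ for all $\vec{x}\in F_n$. $A_{i,j}$ denotes the entry of $A$ in row $i$, column $j$. *)

theory Defs
  imports "HOL-Library.Z2" "Jordan_Normal_Form.Matrix"
begin

text \<open>Vectors over Z_2 (type bit) of length n with no two consecutive ones.
  Indices are 0-based: components 0..n-1 correspond to x_1..x_n.\<close>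
definition F :: "nat \<Rightarrow> bit vec set" where
  "F n = {x. x \<in> carrier_vec n \<and> (\<forall>i. i + 1 < n \<longrightarrow> \<not> (x $ i = 1 \<and> x $ (i + 1) = 1))}"

definition F_good :: "nat \<Rightarrow> bit mat \<Rightarrow> bool" where
  "F_good n A \<longleftrightarrow> A \<in> carrier_mat n n \<and> invertible_mat A \<and> (\<forall>x \<in> F n. A *\<^sub>v x \<in> F n)"

end

theory Submission
  imports Defs
begin

lemma mult_ind:
  fixes A :: "bit mat"
  assumes "A \<in> carrier_mat n n" "S \<subseteq> {0..<n}" "r < n"
  shows "(A *\<^sub>v vec n (\<lambda>l. if l \<in> S then 1 else 0)) $ r = (\<Sum>l\<in>S. A $$ (r, l))"
proof -
  have "(A *\<^sub>v vec n (\<lambda>l. if l \<in> S then 1 else 0)) $ r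
      = (\<Sum>l\<in>{0..<n}. A $$ (r, l) * (if l \<in> S then 1 else 0))"
    using assms apply (subst index_mult_mat_vec)
     apply simp
    unfolding scalar_prod_def
    by (intro sum.cong) (auto simp del: One_nat_def)
  also have "\<dots> = (\<Sum>l\<in>{0..<n}. if l \<in> S then A $$ (r, l) else 0)"
    by (rule sum.cong) simp_all
  also have "\<dots> = (\<Sum>l\<in>S. A $$ (r, l))"
    using assms(2) by (simp add: sum.If_cases Int_absorb1)
  finally show ?thesis .
qed

lemma F_adj:
  assumes "y \<in> F n" "a + 1 = b \<or> b + 1 = a" "a < n" "b < n" "y $ a = 1" "y $ b = 1"
  shows False
proof -
  have h: "\<forall>i. i + 1 < n \<longrightarrow> \<not> (y $ i = 1 \<and> y $ (i + 1) = 1)"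
    using assms(1) unfolding F_def by blast
  from assms(2) show False
  proof
    assume "a + 1 = b" thus False using h assms(4-6) by blast
  next
    assume "b + 1 = a" thus False using h assms(3-6) by blast
  qed
qed

lemma ind_F:
  assumes "S \<subseteq> {0..<n}" "\<And>a b. a \<in> S \<Longrightarrow> b \<in> S \<Longrightarrow> a + 1 \<noteq> b"
  shows "vec n (\<lambda>l. if l \<in> S then 1 else 0) \<in> F n"
  using assms unfolding F_def by auto

theorem lemma1:
  fixes A :: "bit mat" and n i j i' k :: nat
  assumes "F_good n A"
    and "i < n" and "j < n" and "A $$ (i, j) = 1"
    and "i' + 1 = i \<or> i' = i + 1" and "i' < n"
    and "k < n" and "A $$ (i', k) = 1"
  shows "k + 1 = j \<or> k = j + 1"
proof (rule ccontr)
  assume nadj: "\<not> (k + 1 = j \<or> k = j + 1)"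
  have Ac: "A \<in> carrier_mat n n" and good: "\<And>x. x \<in> F n \<Longrightarrow> A *\<^sub>v x \<in> F n"
    using assms(1) unfolding F_good_def by auto
  have adj: "i + 1 = i' \<or> i' + 1 = i" using assms(5) by auto
  define v where "v S = vec n (\<lambda>l. if l \<in> S then (1::bit) else 0)" for S
  have vj: "A *\<^sub>v v {j} \<in> F n"
    by (rule good, unfold v_def, rule ind_F) (use assms in auto)
  have vk: "A *\<^sub>v v {k} \<in> F n"
    by (rule good, unfold v_def, rule ind_F) (use assms in auto)
  have cj: "\<And>r. r < n \<Longrightarrow> (A *\<^sub>v v {j}) $ r = A $$ (r, j)"
    unfolding v_def using mult_ind[OF Ac, of "{j}"] assms(3) by simp
  have ck: "\<And>r. r < n \<Longrightarrow> (A *\<^sub>v v {k}) $ r = A $$ (r, k)"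
    unfolding v_def using mult_ind[OF Ac, of "{k}"] assms(7) by simp
  have Fj: "(A *\<^sub>v v {j}) $ i = 1 \<Longrightarrow> (A *\<^sub>v v {j}) $ i' = 1 \<Longrightarrow> False"
    by (rule F_adj[OF vj adj assms(2) assms(6)])
  have Fk: "(A *\<^sub>v v {k}) $ i = 1 \<Longrightarrow> (A *\<^sub>v v {k}) $ i' = 1 \<Longrightarrow> False"
    by (rule F_adj[OF vk adj assms(2) assms(6)])
  have ij: "A $$ (i', j) \<noteq> 1"
    using Fj cj[OF assms(2)] cj[OF assms(6)] assms(4) by metis
  have ik: "A $$ (i, k) \<noteq> 1"
    using Fk ck[OF assms(2)] ck[OF assms(6)] assms(8) by metis
  show False
  proof (cases "k = j")
    case True
    show False using ij assms(8) True by simp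
  next
    case False
    have a1: "A $$ (i', j) = 0" using ij by (cases "A $$ (i', j)") auto
    have a2: "A $$ (i, k) = 0" using ik by (cases "A $$ (i, k)") auto
    have vjk: "A *\<^sub>v v {j, k} \<in> F n"
      by (rule good, unfold v_def, rule ind_F) (use assms nadj in auto)
    have cjk: "\<And>r. r < n \<Longrightarrow> (A *\<^sub>v v {j,k}) $ r = A $$ (r, j) + A $$ (r, k)"
      unfolding v_def using mult_ind[OF Ac, of "{j,k}"] assms(3,7) False by simp
    have "(A *\<^sub>v v {j,k}) $ i = 1" using cjk[OF assms(2)] assms(4) a2 by simp
    moreover have "(A *\<^sub>v v {j,k}) $ i' = 1" using cjk[OF assms(6)] assms(8) a1 by simp
    ultimately show False by (rule F_adj[OF vjk adj assms(2) assms(6)])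
  qed
qed

end
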